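(* Let $n\ge1$ and let $U\in\mathcal{C}_2^{(n)}$ be a Clifford unitary with Pauli periodicity $m\ge 1$. Then $(CU)^{-1}=C(U^{-1})$, where $U^{-1}\in\mathcal{C}_2^{(n)}$ again has Pauli periodicity $m$, and consequently $(CU)^{-1}\in\mathcal{C}_{m+2}^{(n+1)}\setminus\mathcal{C}_{m+1}^{(n+1)}$, i.e. $(CU)^{-1}$ lies in the same (strict) level of the Clifford hierarchy as $CU$.
   Context: The $n$-qubit Pauli group is $\mathcal{P}_n=\{\omega P_1\otimes\cdots\otimes P_n:\ \omega\in\{\pm1,\pm \mathrm{i}\},\ P_j\in\{I,X,Y,Z\}\}$. The Clifford hierarchy: $\mathcal{C}_1^{(n)}:=\mathcal{P}_n$, $\mathcal{C}_{k+1}^{(n)}:=\{U\in U(2^n):\ UPU^\dagger\in\mathcal{C}_k^{(n)}\ \forall P\in\mathcal{P}_n\}$; $\mathcal{C}_2^{(n)}$ is the Clifford group. $CU:=\ket{0}\!\bra{0}\otimes I_{2^n}+\ket{1}\!\bra{1}\otimes U$ (first qubit is the control). The Pauli periodicity of $U$ is $\min\{t\ge 0:\ U^{2^t}\in\mathcal{P}_n\}$ (exact membership in $\mathcal{P}_n$). *)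

theory Defs
  imports Complex_Main "Jordan_Normal_Form.Matrix"
begin

definition adj :: "complex mat \<Rightarrow> complex mat" where
  "adj A = mat (dim_col A) (dim_row A) (\<lambda>(i,j). cnj (A $$ (j,i)))"

definition unitary_mat :: "nat \<Rightarrow> complex mat \<Rightarrow> bool" where
  "unitary_mat d U \<longleftrightarrow> U \<in> carrier_mat d d \<and> U * adj U = 1\<^sub>m d \<and> adj U * U = 1\<^sub>m d"

text \<open>Kronecker (tensor) product; the first factor indexes the most significant part.\<close>
definition kron :: "complex mat \<Rightarrow> complex mat \<Rightarrow> complex mat" where
  "kron A B = mat (dim_row A * dim_row B) (dim_col A * dim_col B)
     (\<lambda>(i,j). A $$ (i div dim_row B, j div dim_col B) * B $$ (i mod dim_row B, j mod dim_col B))"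

fun kron_list :: "complex mat list \<Rightarrow> complex mat" where
  "kron_list [] = 1\<^sub>m 1"
| "kron_list (A # As) = kron A (kron_list As)"

definition pauli_I :: "complex mat" where "pauli_I = mat_of_rows_list 2 [[1,0],[0,1]]"
definition pauli_X :: "complex mat" where "pauli_X = mat_of_rows_list 2 [[0,1],[1,0]]"
definition pauli_Y :: "complex mat" where "pauli_Y = mat_of_rows_list 2 [[0,-\<i>],[\<i>,0]]"
definition pauli_Z :: "complex mat" where "pauli_Z = mat_of_rows_list 2 [[1,0],[0,-1]]"

definition pauli_group :: "nat \<Rightarrow> complex mat set" where
  "pauli_group n = {\<omega> \<cdot>\<^sub>m kron_list Ps | \<omega> Ps.
      \<omega> \<in> {1, -1, \<i>, -\<i>} \<and> length Ps = n \<and> set Ps \<subseteq> {pauli_I, pauli_X, pauli_Y, pauli_Z}}"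

text \<open>Clifford hierarchy: clifford_level n k is C_k^{(n)} for k \<ge> 1 (level 0 is unused).\<close>
fun clifford_level :: "nat \<Rightarrow> nat \<Rightarrow> complex mat set" where
  "clifford_level n 0 = {}"
| "clifford_level n (Suc 0) = pauli_group n"
| "clifford_level n (Suc (Suc k)) =
     {U. unitary_mat (2^n) U \<and> (\<forall>P \<in> pauli_group n. U * P * adj U \<in> clifford_level n (Suc k))}"

definition ket0bra0 :: "complex mat" where "ket0bra0 = mat_of_rows_list 2 [[1,0],[0,0]]"
definition ket1bra1 :: "complex mat" where "ket1bra1 = mat_of_rows_list 2 [[0,0],[0,1]]"

definition controlled :: "nat \<Rightarrow> complex mat \<Rightarrow> complex mat" where
  "controlled n U = kron ket0bra0 (1\<^sub>m (2^n)) + kron ket1bra1 U"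

definition pauli_periodicity :: "nat \<Rightarrow> complex mat \<Rightarrow> nat \<Rightarrow> bool" where
  "pauli_periodicity n U m \<longleftrightarrow>
     (U ^\<^sub>m (2^m)) \<in> pauli_group n \<and> (\<forall>t<m. (U ^\<^sub>m (2^t)) \<notin> pauli_group n)"

end

theory Submission
  imports Defs
begin


definition mat2 :: "complex \<Rightarrow> complex \<Rightarrow> complex \<Rightarrow> complex \<Rightarrow> complex mat" where
  "mat2 a b c d = mat_of_rows_list 2 [[a,b],[c,d]]"

lemma less2: "(i::nat) < 2 \<longleftrightarrow> i = 0 \<or> i = 1" by auto

lemma mat2_carrier[simp]: "mat2 a b c d \<in> carrier_mat 2 2"
  and mat2_dims[simp]: "dim_row (mat2 a b c d) = 2" "dim_col (mat2 a b c d) = 2"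
  by (auto simp: mat2_def mat_of_rows_list_def)

lemma mat2_index[simp]: "mat2 a b c d $$ (0,0) = a" "mat2 a b c d $$ (0,1) = b"
   "mat2 a b c d $$ (1,0) = c" "mat2 a b c d $$ (1,1) = d"
  by (auto simp: mat2_def mat_of_rows_list_def)

lemma mat2_index'[simp]: "mat2 a b c d $$ (0,Suc 0) = b"
   "mat2 a b c d $$ (Suc 0,0) = c" "mat2 a b c d $$ (Suc 0,Suc 0) = d"
  by (auto simp: mat2_def mat_of_rows_list_def)

lemma mat2_eq_iff: "mat2 a b c d = mat2 a' b' c' d' \<longleftrightarrow> a = a' \<and> b = b' \<and> c = c' \<and> d = d'"
  by (metis mat2_index)

lemma mat2_eqI: "M \<in> carrier_mat 2 2 \<Longrightarrow> M $$ (0,0) = a \<Longrightarrow> M $$ (0,1) = b \<Longrightarrow> M $$ (1,0) = c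
   \<Longrightarrow> M $$ (1,1) = d \<Longrightarrow> M = mat2 a b c d"
  by (rule eq_matI) (auto simp: less2)

lemma mat2_mult[simp]: "mat2 a b c d * mat2 e f g h = mat2 (a*e+b*g) (a*f+b*h) (c*e+d*g) (c*f+d*h)"
  by (rule mat2_eqI) (auto simp: scalar_prod_def col_def row_def numeral_2_eq_2 lessThan_Suc)

lemma mat2_smult[simp]: "k \<cdot>\<^sub>m mat2 a b c d = mat2 (k*a) (k*b) (k*c) (k*d)"
  by (rule mat2_eqI) auto

lemma mat2_one: "1\<^sub>m 2 = mat2 1 0 0 1"
  by (rule mat2_eqI) auto

lemma adj_index[simp]: "i < dim_col A \<Longrightarrow> j < dim_row A \<Longrightarrow> adj A $$ (i,j) = cnj (A $$ (j,i))"
  unfolding adj_def by simp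

lemma adj_dims1[simp]: "dim_row (adj A) = dim_col A"
  unfolding adj_def by (simp del: adj_index)
lemma adj_dims2[simp]: "dim_col (adj A) = dim_row A"
  unfolding adj_def by (simp del: adj_index)

lemma adj_carrier[simp]: "A \<in> carrier_mat r c \<Longrightarrow> adj A \<in> carrier_mat c r"
  unfolding carrier_mat_def by simp

lemma mat2_adj[simp]: "adj (mat2 a b c d) = mat2 (cnj a) (cnj c) (cnj b) (cnj d)"
  by (rule mat2_eqI) auto

lemma paulis: "pauli_I = mat2 1 0 0 1" "pauli_X = mat2 0 1 1 0" "pauli_Y = mat2 0 (-\<i>) \<i> 0"
  "pauli_Z = mat2 1 0 0 (-1)" "ket0bra0 = mat2 1 0 0 0" "ket1bra1 = mat2 0 0 0 1"
  by (auto simp: mat2_def pauli_I_def pauli_X_def pauli_Y_def pauli_Z_def ket0bra0_def ket1bra1_def)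

definition S1 :: "complex mat set" where "S1 = {pauli_I, pauli_X, pauli_Y, pauli_Z}"
definition Ph :: "complex set" where "Ph = {1, -1, \<i>, -\<i>}"

lemma S1_carrier: "a \<in> S1 \<Longrightarrow> a \<in> carrier_mat 2 2"
  by (auto simp: S1_def paulis)

lemma S1_mult: "a \<in> S1 \<Longrightarrow> b \<in> S1 \<Longrightarrow> \<exists>w\<in>Ph. \<exists>c\<in>S1. a * b = w \<cdot>\<^sub>m c"
  unfolding S1_def Ph_def paulis
  by (elim insertE emptyE; simp add: mat2_eq_iff)

lemma S1_conj: "a \<in> S1 \<Longrightarrow> b \<in> S1 \<Longrightarrow> a * b * adj a = b \<or> a * b * adj a = (-1) \<cdot>\<^sub>m b"
  unfolding S1_def paulis
  by (elim insertE emptyE; simp add: mat2_eq_iff)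

lemma S1_sq: "a \<in> S1 \<Longrightarrow> a * a = 1\<^sub>m 2"
  unfolding S1_def paulis mat2_one
  by (elim insertE emptyE; simp add: mat2_eq_iff)

lemma S1_adj: "a \<in> S1 \<Longrightarrow> adj a = a"
  unfolding S1_def paulis
  by (elim insertE emptyE; simp add: mat2_eq_iff)

lemma div_mod_hi: "(N::nat) \<le> i \<Longrightarrow> i < N + N \<Longrightarrow> i div N = 1 \<and> i mod N = i - N"
proof -
  assume a: "N \<le> i" "i < N + N"
  hence "0 < N" by auto
  have "i div N = Suc ((i - N) div N)" using a \<open>0 < N\<close> by (simp add: le_div_geq)
  moreover have "(i - N) div N = 0" using a by simp
  moreover have "i mod N = (i - N) mod N" using a \<open>0 < N\<close> by (simp add: le_mod_geq)
  moreover have "(i - N) mod N = i - N" using a by simp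
  ultimately show ?thesis by simp
qed

lemma kron_block:
  assumes a: "a \<in> carrier_mat 2 2" and Q: "Q \<in> carrier_mat N N"
  shows "kron a Q = four_block_mat (a$$(0,0) \<cdot>\<^sub>m Q) (a$$(0,1) \<cdot>\<^sub>m Q) (a$$(1,0) \<cdot>\<^sub>m Q) (a$$(1,1) \<cdot>\<^sub>m Q)"
proof (rule eq_matI)
  show "dim_row (kron a Q) = dim_row (four_block_mat (a$$(0,0) \<cdot>\<^sub>m Q) (a$$(0,1) \<cdot>\<^sub>m Q) (a$$(1,0) \<cdot>\<^sub>m Q) (a$$(1,1) \<cdot>\<^sub>m Q))"
    using a Q by (simp add: kron_def)
  show "dim_col (kron a Q) = dim_col (four_block_mat (a$$(0,0) \<cdot>\<^sub>m Q) (a$$(0,1) \<cdot>\<^sub>m Q) (a$$(1,0) \<cdot>\<^sub>m Q) (a$$(1,1) \<cdot>\<^sub>m Q))"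
    using a Q by (simp add: kron_def)
  fix i j assume "i < dim_row (four_block_mat (a$$(0,0) \<cdot>\<^sub>m Q) (a$$(0,1) \<cdot>\<^sub>m Q) (a$$(1,0) \<cdot>\<^sub>m Q) (a$$(1,1) \<cdot>\<^sub>m Q))"
     "j < dim_col (four_block_mat (a$$(0,0) \<cdot>\<^sub>m Q) (a$$(0,1) \<cdot>\<^sub>m Q) (a$$(1,0) \<cdot>\<^sub>m Q) (a$$(1,1) \<cdot>\<^sub>m Q))"
  hence ij: "i < N + N" "j < N + N" using Q by auto
  have k: "kron a Q $$ (i,j) = a $$ (i div N, j div N) * Q $$ (i mod N, j mod N)"
    using a Q ij by (simp add: kron_def)
  show "kron a Q $$ (i,j) = four_block_mat (a$$(0,0) \<cdot>\<^sub>m Q) (a$$(0,1) \<cdot>\<^sub>m Q) (a$$(1,0) \<cdot>\<^sub>m Q) (a$$(1,1) \<cdot>\<^sub>m Q) $$ (i,j)"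
    unfolding k using ij Q div_mod_hi[of N i] div_mod_hi[of N j]
    by (cases "i < N"; cases "j < N"; simp)
qed

lemma adj_mult: assumes "A \<in> carrier_mat a b" "B \<in> carrier_mat b c"
  shows "adj (A * B) = adj B * adj A"
  by (rule eq_matI) (use assms in \<open>auto simp: scalar_prod_def mult.commute intro!: sum.cong\<close>)

lemma adj_adj[simp]: "adj (adj A) = A"
  by (rule eq_matI) auto

lemma adj_one[simp]: "adj (1\<^sub>m N) = 1\<^sub>m N"
  by (rule eq_matI) auto

lemma adj_zero[simp]: "adj (0\<^sub>m N M) = 0\<^sub>m M N"
  by (rule eq_matI) auto

lemma adj_smult: "adj (k \<cdot>\<^sub>m A) = cnj k \<cdot>\<^sub>m adj A"
  by (rule eq_matI) auto

lemma adj_four_block: assumes "A \<in> carrier_mat N N" "B \<in> carrier_mat N N" "C \<in> carrier_mat N N" "D \<in> carrier_mat N N"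
  shows "adj (four_block_mat A B C D) = four_block_mat (adj A) (adj C) (adj B) (adj D)"
  by (rule eq_matI) (use assms in auto)

lemma adj_kron: assumes a: "a \<in> carrier_mat 2 2" and Q: "Q \<in> carrier_mat N N"
  shows "adj (kron a Q) = kron (adj a) (adj Q)"
proof -
  have aQ: "adj a \<in> carrier_mat 2 2" "adj Q \<in> carrier_mat N N" using a Q by auto
  show ?thesis
    unfolding kron_block[OF a Q] kron_block[OF aQ]
    using a Q by (subst adj_four_block) (auto simp: adj_smult)
qed

lemma mat2_expand: "a \<in> carrier_mat 2 2 \<Longrightarrow> a = mat2 (a$$(0,0)) (a$$(0,1)) (a$$(1,0)) (a$$(1,1))"
  by (rule mat2_eqI) auto

lemma kron_mat2: "Q \<in> carrier_mat N N \<Longrightarrow>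
  kron (mat2 p q r s) Q = four_block_mat (p \<cdot>\<^sub>m Q) (q \<cdot>\<^sub>m Q) (r \<cdot>\<^sub>m Q) (s \<cdot>\<^sub>m Q)"
  by (subst kron_block[where N=N]) auto

lemma blk_aux: fixes Q :: "complex mat" assumes Q: "Q \<in> carrier_mat N N" and Q': "Q' \<in> carrier_mat N N"
  shows "(p \<cdot>\<^sub>m Q) * (e \<cdot>\<^sub>m Q') + (q \<cdot>\<^sub>m Q) * (g \<cdot>\<^sub>m Q') = (p*e+q*g) \<cdot>\<^sub>m (Q * Q')"
proof -
  have c1: "e \<cdot>\<^sub>m Q' \<in> carrier_mat N N" "g \<cdot>\<^sub>m Q' \<in> carrier_mat N N" using Q' by auto
  have "(p \<cdot>\<^sub>m Q) * (e \<cdot>\<^sub>m Q') = p \<cdot>\<^sub>m (e \<cdot>\<^sub>m (Q * Q'))"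
    using mult_smult_assoc_mat[OF Q c1(1)] mult_smult_distrib[OF Q Q'] by simp
  moreover have "(q \<cdot>\<^sub>m Q) * (g \<cdot>\<^sub>m Q') = q \<cdot>\<^sub>m (g \<cdot>\<^sub>m (Q * Q'))"
    using mult_smult_assoc_mat[OF Q c1(2)] mult_smult_distrib[OF Q Q'] by simp
  ultimately show ?thesis
    by (simp, intro eq_matI) (use assms in \<open>auto simp: algebra_simps\<close>)
qed

lemma kron_mult2: assumes a: "a \<in> carrier_mat 2 2" and b: "b \<in> carrier_mat 2 2"
  and Q: "Q \<in> carrier_mat N N" and Q': "Q' \<in> carrier_mat N N"
  shows "kron a Q * kron b Q' = kron (a * b) (Q * Q')"
proof -
  obtain p q r s where ap: "a = mat2 p q r s" using mat2_expand[OF a] by blast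
  obtain e f g h where bp: "b = mat2 e f g h" using mat2_expand[OF b] by blast
  have QQ: "Q * Q' \<in> carrier_mat N N" using Q Q' by auto
  show ?thesis
    unfolding ap bp mat2_mult kron_mat2[OF Q] kron_mat2[OF Q'] kron_mat2[OF QQ]
    by (subst mult_four_block_mat[of _ N N _ N _ N _ _ N _ N])
       (use Q Q' in \<open>auto simp: blk_aux\<close>)
qed

lemma div_lt2: "i < 2*N \<Longrightarrow> i div N < (2::nat)"
  by (simp add: less_mult_imp_div_less)

lemma kron_smult_right: assumes "a \<in> carrier_mat 2 2" "Q \<in> carrier_mat N N"
  shows "kron a (k \<cdot>\<^sub>m Q) = k \<cdot>\<^sub>m kron a Q"
  by (rule eq_matI) (use assms in \<open>auto simp: kron_def\<close>)

lemma kron_smult_left: assumes "a \<in> carrier_mat 2 2" "Q \<in> carrier_mat N N"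
  shows "kron (k \<cdot>\<^sub>m a) Q = k \<cdot>\<^sub>m kron a Q"
  by (rule eq_matI) (use assms in \<open>auto simp: kron_def div_lt2\<close>)

lemma kron_carrier[simp]: "a \<in> carrier_mat 2 2 \<Longrightarrow> Q \<in> carrier_mat N N \<Longrightarrow> kron a Q \<in> carrier_mat (2*N) (2*N)"
  unfolding kron_def carrier_mat_def by simp

lemma kron_one: "kron (1\<^sub>m 2) (1\<^sub>m N) = 1\<^sub>m (2*N)"
  by (subst kron_block[where N=N]) (auto simp: mult_2 intro!: eq_matI)

lemma Ph_mult: "w \<in> Ph \<Longrightarrow> v \<in> Ph \<Longrightarrow> w * v \<in> Ph"
  unfolding Ph_def by auto

lemma Ph_cnj: "w \<in> Ph \<Longrightarrow> cnj w \<in> Ph"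
  unfolding Ph_def by auto

lemma Ph_neg: "w \<in> Ph \<Longrightarrow> - w \<in> Ph"
  unfolding Ph_def by auto

lemma Ph_norm: "w \<in> Ph \<Longrightarrow> w * cnj w = 1"
  unfolding Ph_def by auto

lemma Ph_sq: "w \<in> Ph \<Longrightarrow> w * w = 1 \<or> w * w = -1"
  unfolding Ph_def by auto

lemma Ph_one: "1 \<in> Ph" unfolding Ph_def by auto

lemma kron_list_carrier: "set Ps \<subseteq> S1 \<Longrightarrow> kron_list Ps \<in> carrier_mat (2^length Ps) (2^length Ps)"
  by (induction Ps) (auto simp: S1_carrier)

lemma pg_def': "pauli_group n = {w \<cdot>\<^sub>m kron_list Ps | w Ps. w \<in> Ph \<and> length Ps = n \<and> set Ps \<subseteq> S1}"
  unfolding pauli_group_def Ph_def S1_def by simp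

lemma pg_0: "pauli_group 0 = {w \<cdot>\<^sub>m 1\<^sub>m 1 | w. w \<in> Ph}"
  unfolding pg_def' by auto

lemma pg_SucE: assumes "P \<in> pauli_group (Suc n)"
  obtains a Q where "P = kron a Q" "a \<in> S1" "Q \<in> pauli_group n"
proof -
  obtain w Ps where P: "P = w \<cdot>\<^sub>m kron_list Ps" "w \<in> Ph" "length Ps = Suc n" "set Ps \<subseteq> S1"
    using assms unfolding pg_def' by blast
  then obtain a Ps' where Ps: "Ps = a # Ps'" by (cases Ps) auto
  have c: "a \<in> carrier_mat 2 2" "kron_list Ps' \<in> carrier_mat (2^n) (2^n)"
    using P Ps kron_list_carrier[of Ps'] by (auto simp: S1_carrier)
  have "P = kron a (w \<cdot>\<^sub>m kron_list Ps')"
    using P(1) Ps kron_smult_right[OF c] by simp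
  moreover have "w \<cdot>\<^sub>m kron_list Ps' \<in> pauli_group n" using P Ps unfolding pg_def' by auto
  moreover have "a \<in> S1" using P Ps by auto
  ultimately show ?thesis using that by blast
qed

lemma pg_SucI: assumes "a \<in> S1" "Q \<in> pauli_group n" shows "kron a Q \<in> pauli_group (Suc n)"
proof -
  obtain w Ps where P: "Q = w \<cdot>\<^sub>m kron_list Ps" "w \<in> Ph" "length Ps = n" "set Ps \<subseteq> S1"
    using assms unfolding pg_def' by blast
  have c: "a \<in> carrier_mat 2 2" "kron_list Ps \<in> carrier_mat (2^n) (2^n)"
    using P assms kron_list_carrier[of Ps] by (auto simp: S1_carrier)
  have "kron a Q = w \<cdot>\<^sub>m kron_list (a # Ps)" using P(1) kron_smult_right[OF c] by simp
  moreover have "length (a # Ps) = Suc n" "set (a # Ps) \<subseteq> S1" using P assms by auto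
  ultimately show ?thesis unfolding pg_def' using P(2) by blast
qed

lemma pg_carrier: "P \<in> pauli_group n \<Longrightarrow> P \<in> carrier_mat (2^n) (2^n)"
  unfolding pg_def' using kron_list_carrier by fastforce

lemma pg_smult: "w \<in> Ph \<Longrightarrow> P \<in> pauli_group n \<Longrightarrow> w \<cdot>\<^sub>m P \<in> pauli_group n"
proof -
  assume w: "w \<in> Ph" and "P \<in> pauli_group n"
  then obtain v Ps where P: "P = v \<cdot>\<^sub>m kron_list Ps" "v \<in> Ph" "length Ps = n" "set Ps \<subseteq> S1"
    unfolding pg_def' by blast
  have "w \<cdot>\<^sub>m P = (w * v) \<cdot>\<^sub>m kron_list Ps" using P(1) by (auto intro!: eq_matI)
  then show ?thesis unfolding pg_def' using P Ph_mult[OF w P(2)] by blast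
qed

lemma pg_mult: "P \<in> pauli_group n \<Longrightarrow> Q \<in> pauli_group n \<Longrightarrow> P * Q \<in> pauli_group n"
proof (induction n arbitrary: P Q)
  case 0
  then obtain w v where "P = w \<cdot>\<^sub>m 1\<^sub>m 1" "Q = v \<cdot>\<^sub>m 1\<^sub>m 1" "w \<in> Ph" "v \<in> Ph" unfolding pg_0 by blast
  moreover have "(w \<cdot>\<^sub>m 1\<^sub>m 1) * (v \<cdot>\<^sub>m 1\<^sub>m 1) = (w * v) \<cdot>\<^sub>m (1\<^sub>m 1 :: complex mat)"
    by (rule eq_matI) (auto simp: scalar_prod_def)
  ultimately show ?case unfolding pg_0 using Ph_mult by blast
next
  case (Suc n)
  obtain a P' where P: "P = kron a P'" "a \<in> S1" "P' \<in> pauli_group n" using Suc.prems(1) by (rule pg_SucE)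
  obtain b Q' where Q: "Q = kron b Q'" "b \<in> S1" "Q' \<in> pauli_group n" using Suc.prems(2) by (rule pg_SucE)
  obtain w c where wc: "w \<in> Ph" "c \<in> S1" "a * b = w \<cdot>\<^sub>m c" using S1_mult[OF P(2) Q(2)] by blast
  have cc: "a \<in> carrier_mat 2 2" "b \<in> carrier_mat 2 2" "c \<in> carrier_mat 2 2"
    "P' \<in> carrier_mat (2^n) (2^n)" "Q' \<in> carrier_mat (2^n) (2^n)"
    using P Q wc by (auto simp: S1_carrier pg_carrier)
  have "P * Q = kron (w \<cdot>\<^sub>m c) (P' * Q')" using kron_mult2[OF cc(1,2,4,5)] P Q wc by simp
  also have "\<dots> = kron c (w \<cdot>\<^sub>m (P' * Q'))"
    using kron_smult_left[OF cc(3), where N="2^n" and Q="P' * Q'"] kron_smult_right[OF cc(3), where N="2^n" and Q="P' * Q'"] cc by simp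
  finally show ?case using Suc.IH[OF P(3) Q(3)] pg_smult wc pg_SucI by metis
qed

lemma pg_adj: "P \<in> pauli_group n \<Longrightarrow> adj P \<in> pauli_group n"
proof (induction n arbitrary: P)
  case 0
  then obtain w where "P = w \<cdot>\<^sub>m 1\<^sub>m 1" "w \<in> Ph" unfolding pg_0 by blast
  then show ?case unfolding pg_0 using Ph_cnj by (auto simp: adj_smult)
next
  case (Suc n)
  obtain a P' where P: "P = kron a P'" "a \<in> S1" "P' \<in> pauli_group n" using Suc.prems(1) by (rule pg_SucE)
  have "adj P = kron a (adj P')" using P adj_kron[OF S1_carrier[OF P(2)] pg_carrier[OF P(3)]] S1_adj by simp
  then show ?case using Suc.IH[OF P(3)] P pg_SucI by simp
qed

lemma pg_unit: "P \<in> pauli_group n \<Longrightarrow> P * adj P = 1\<^sub>m (2^n)"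
proof (induction n arbitrary: P)
  case 0
  then obtain w where "P = w \<cdot>\<^sub>m 1\<^sub>m 1" "w \<in> Ph" unfolding pg_0 by blast
  then show ?case using Ph_norm by (auto simp: adj_smult scalar_prod_def intro!: eq_matI)
next
  case (Suc n)
  obtain a P' where P: "P = kron a P'" "a \<in> S1" "P' \<in> pauli_group n" using Suc.prems(1) by (rule pg_SucE)
  have cc: "a \<in> carrier_mat 2 2" "P' \<in> carrier_mat (2^n) (2^n)" using P by (auto simp: S1_carrier pg_carrier)
  have "P * adj P = kron (a * a) (P' * adj P')"
    using P adj_kron[OF cc] S1_adj kron_mult2[OF cc(1) cc(1) cc(2) adj_carrier[OF cc(2)]] by simp
  then show ?case using Suc.IH[OF P(3)] S1_sq[OF P(2)] kron_one by simp
qed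

lemma pg_unit': "P \<in> pauli_group n \<Longrightarrow> adj P * P = 1\<^sub>m (2^n)"
  using pg_unit[OF pg_adj, of P n] by simp

lemma pg_conj: "P \<in> pauli_group n \<Longrightarrow> Q \<in> pauli_group n \<Longrightarrow> P * Q * adj P = Q \<or> P * Q * adj P = (-1) \<cdot>\<^sub>m Q"
proof (induction n arbitrary: P Q)
  case 0
  then obtain w v where "P = w \<cdot>\<^sub>m 1\<^sub>m 1" "Q = v \<cdot>\<^sub>m 1\<^sub>m 1" "w \<in> Ph" "v \<in> Ph" unfolding pg_0 by blast
  moreover have "w * v * cnj w = v" if "w \<in> Ph" for w v using Ph_norm[OF that] by (simp add: algebra_simps)
  ultimately show ?case by (auto simp: adj_smult scalar_prod_def intro!: eq_matI)
next
  case (Suc n)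
  obtain a P' where P: "P = kron a P'" "a \<in> S1" "P' \<in> pauli_group n" using Suc.prems(1) by (rule pg_SucE)
  obtain b Q' where Q: "Q = kron b Q'" "b \<in> S1" "Q' \<in> pauli_group n" using Suc.prems(2) by (rule pg_SucE)
  have cc: "a \<in> carrier_mat 2 2" "b \<in> carrier_mat 2 2"
    "P' \<in> carrier_mat (2^n) (2^n)" "Q' \<in> carrier_mat (2^n) (2^n)"
    using P Q by (auto simp: S1_carrier pg_carrier)
  have "P * Q * adj P = kron (a * b * adj a) (P' * Q' * adj P')"
    using P Q adj_kron[OF cc(1,3)] kron_mult2[OF cc(1,2,3,4)]
      kron_mult2[OF mult_carrier_mat[OF cc(1,2)] adj_carrier[OF cc(1)] mult_carrier_mat[OF cc(3,4)] adj_carrier[OF cc(3)]]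
    by simp
  moreover have "kron (s \<cdot>\<^sub>m b) (t \<cdot>\<^sub>m Q') = (s * t) \<cdot>\<^sub>m Q" for s t
  proof -
    have "kron (s \<cdot>\<^sub>m b) (t \<cdot>\<^sub>m Q') = s \<cdot>\<^sub>m kron b (t \<cdot>\<^sub>m Q')"
      by (rule kron_smult_left[OF cc(2), where N="2^n"]) (use cc(4) in simp)
    also have "\<dots> = s \<cdot>\<^sub>m (t \<cdot>\<^sub>m Q)" using kron_smult_right[OF cc(2,4)] Q(1) by simp
    also have "\<dots> = (s * t) \<cdot>\<^sub>m Q" by (auto intro!: eq_matI)
    finally show ?thesis .
  qed
  moreover have one: "(1::complex) \<cdot>\<^sub>m M = M" for M by (rule eq_matI) auto
  moreover obtain s where s: "s = 1 \<or> s = -1" "a * b * adj a = s \<cdot>\<^sub>m b"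
    using S1_conj[OF P(2) Q(2)] one by metis
  moreover obtain t where t: "t = 1 \<or> t = -1" "P' * Q' * adj P' = t \<cdot>\<^sub>m Q'"
    using Suc.IH[OF P(3) Q(3)] one by metis
  ultimately have "P * Q * adj P = (s * t) \<cdot>\<^sub>m Q" by simp
  then show ?case using s(1) t(1) one by auto
qed

lemma one_smult: "(1::complex) \<cdot>\<^sub>m M = M" by (rule eq_matI) auto

lemma pg_herm: "P \<in> pauli_group n \<Longrightarrow> adj P = P \<or> adj P = (-1) \<cdot>\<^sub>m P"
proof (induction n arbitrary: P)
  case 0
  then obtain w where P: "P = w \<cdot>\<^sub>m 1\<^sub>m 1" "w \<in> Ph" unfolding pg_0 by blast
  have "cnj w = w \<or> cnj w = -1 * w" using P(2) unfolding Ph_def by auto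
  then show ?case using P by (auto simp: adj_smult intro!: eq_matI)
next
  case (Suc n)
  obtain a P' where P: "P = kron a P'" "a \<in> S1" "P' \<in> pauli_group n" using Suc.prems(1) by (rule pg_SucE)
  have cc: "a \<in> carrier_mat 2 2" "P' \<in> carrier_mat (2^n) (2^n)" using P by (auto simp: S1_carrier pg_carrier)
  have "adj P = kron a (adj P')" using P adj_kron[OF cc] S1_adj by simp
  then show ?case using Suc.IH[OF P(3)] kron_smult_right[OF cc] P(1) by auto
qed

lemma pg_one: "1\<^sub>m (2^n) \<in> pauli_group n"
proof (induction n)
  case 0
  have "1\<^sub>m 1 = (1::complex) \<cdot>\<^sub>m 1\<^sub>m 1" by (simp add: one_smult)
  then show ?case unfolding pg_0 using Ph_one by auto
next
  case (Suc n)
  have "pauli_I \<in> S1" unfolding S1_def by simp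
  moreover have "pauli_I = 1\<^sub>m 2" by (simp add: paulis mat2_one)
  ultimately show ?case using pg_SucI[OF _ Suc.IH, of pauli_I] kron_one[of "2^n"] by simp
qed

lemma pg_finite: "finite (pauli_group n)"
proof (induction n)
  case 0
  have "pauli_group 0 = (\<lambda>w. w \<cdot>\<^sub>m 1\<^sub>m 1) ` Ph" unfolding pg_0 by auto
  then show ?case unfolding Ph_def by simp
next
  case (Suc n)
  have "pauli_group (Suc n) \<subseteq> (\<lambda>(a,Q). kron a Q) ` (S1 \<times> pauli_group n)"
    by (auto elim!: pg_SucE)
  moreover have "finite S1" unfolding S1_def by simp
  ultimately show ?case using Suc.IH finite_subset by blast
qed

lemma pg_neg: "P \<in> pauli_group n \<Longrightarrow> (-1) \<cdot>\<^sub>m P \<in> pauli_group n"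
  by (rule pg_smult) (auto simp: Ph_def)

declare adj_carrier[simp del]

lemma sq_mult_carrier[simp]: "A \<in> carrier_mat N N \<Longrightarrow> B \<in> carrier_mat N N \<Longrightarrow> A * B \<in> carrier_mat N N"
  by simp

lemma sq_assoc: "A \<in> carrier_mat N N \<Longrightarrow> B \<in> carrier_mat N N \<Longrightarrow> C \<in> carrier_mat N N \<Longrightarrow> A * B * C = A * (B * C)"
  by simp

lemma unitary_carrier: "unitary_mat N A \<Longrightarrow> A \<in> carrier_mat N N"
  unfolding unitary_mat_def by simp

lemma unitary_mult: assumes "unitary_mat N A" "unitary_mat N B" shows "unitary_mat N (A * B)"
proof -
  have c: "A \<in> carrier_mat N N" "B \<in> carrier_mat N N" "adj A \<in> carrier_mat N N" "adj B \<in> carrier_mat N N"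
    using assms unfolding unitary_mat_def by auto
  have u: "A * adj A = 1\<^sub>m N" "adj A * A = 1\<^sub>m N" "B * adj B = 1\<^sub>m N" "adj B * B = 1\<^sub>m N"
    using assms unfolding unitary_mat_def by auto
  have "A * B * adj (A * B) = A * (B * adj B) * adj A"
    using c by (simp only: adj_mult[OF c(1,2)] sq_assoc sq_mult_carrier)
  also have "\<dots> = 1\<^sub>m N" using u c by simp
  finally have 1: "A * B * adj (A * B) = 1\<^sub>m N" .
  have "adj (A * B) * (A * B) = adj B * (adj A * A) * B"
    using c by (simp only: adj_mult[OF c(1,2)] sq_assoc sq_mult_carrier)
  also have "\<dots> = 1\<^sub>m N" using u c by simp
  finally show ?thesis using 1 c unfolding unitary_mat_def by auto
qed

lemma unitary_adj: "unitary_mat N A \<Longrightarrow> unitary_mat N (adj A)"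
  unfolding unitary_mat_def by auto

lemma pg_unitary: "P \<in> pauli_group n \<Longrightarrow> unitary_mat (2^n) P"
  unfolding unitary_mat_def using pg_carrier pg_unit pg_unit' by blast

lemma cl2: "clifford_level n 2 = {U. unitary_mat (2^n) U \<and> (\<forall>P \<in> pauli_group n. U * P * adj U \<in> pauli_group n)}"
  by (simp add: numeral_2_eq_2)

lemma cl_unitary: "W \<in> clifford_level n (Suc k) \<Longrightarrow> unitary_mat (2^n) W"
  by (cases k) (auto simp: pg_unitary)

lemma cl_carrier: "W \<in> clifford_level n (Suc k) \<Longrightarrow> W \<in> carrier_mat (2^n) (2^n)"
  using cl_unitary unitary_carrier by blast

lemma pauli_cliff: "P \<in> pauli_group n \<Longrightarrow> P \<in> clifford_level n 2"
  unfolding cl2 using pg_unitary pg_conj pg_neg by fastforce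

lemma cl_nest: "W \<in> clifford_level n (Suc k) \<Longrightarrow> W \<in> clifford_level n (Suc (Suc k))"
proof (induction k arbitrary: W)
  case 0
  then show ?case using pauli_cliff[of W n] by (simp add: numeral_2_eq_2)
next
  case (Suc k)
  then show ?case by auto
qed

lemma cl_nest_le: "W \<in> clifford_level n (Suc j) \<Longrightarrow> j \<le> k \<Longrightarrow> W \<in> clifford_level n (Suc k)"
proof (induction k)
  case 0 then show ?case by simp
next
  case (Suc k)
  show ?case
  proof (cases "j = Suc k")
    case True then show ?thesis using Suc.prems by simp
  next
    case False then show ?thesis using Suc cl_nest by simp
  qed
qed

lemma cliff_mult: assumes A: "A \<in> clifford_level n 2" and B: "B \<in> clifford_level n 2"
  shows "A * B \<in> clifford_level n 2"
proof -
  let ?N = "2^n::nat"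
  have u: "unitary_mat ?N A" "unitary_mat ?N B" using A B unfolding cl2 by auto
  have c: "A \<in> carrier_mat ?N ?N" "B \<in> carrier_mat ?N ?N" "adj A \<in> carrier_mat ?N ?N" "adj B \<in> carrier_mat ?N ?N"
    using u unitary_carrier unitary_adj by blast+
  have "A * B * P * adj (A * B) \<in> pauli_group n" if P: "P \<in> pauli_group n" for P
  proof -
    have cP: "P \<in> carrier_mat ?N ?N" using pg_carrier[OF P] .
    have "A * B * P * adj (A * B) = A * (B * P * adj B) * adj A"
      using c cP by (simp only: adj_mult[OF c(1,2)] sq_assoc sq_mult_carrier)
    moreover have "B * P * adj B \<in> pauli_group n" using B P unfolding cl2 by blast
    moreover have "A * (B * P * adj B) * adj A \<in> pauli_group n" using A calculation(2) unfolding cl2 by blast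
    ultimately show ?thesis by simp
  qed
  then show ?thesis unfolding cl2 using unitary_mult[OF u] by blast
qed

lemma cliff_adj: assumes U: "U \<in> clifford_level n 2" shows "adj U \<in> clifford_level n 2"
proof -
  let ?N = "2^n::nat"
  let ?f = "\<lambda>P. U * P * adj U"
  have u: "unitary_mat ?N U" using U unfolding cl2 by blast
  have c: "U \<in> carrier_mat ?N ?N" "adj U \<in> carrier_mat ?N ?N" using u unitary_carrier unitary_adj by blast+
  have uu: "U * adj U = 1\<^sub>m ?N" "adj U * U = 1\<^sub>m ?N" using u unfolding unitary_mat_def by auto
  have bk: "adj U * ?f P * U = P" if "P \<in> carrier_mat ?N ?N" for P
  proof -
    have "adj U * ?f P * U = (adj U * U) * P * (adj U * U)" using c that by (simp only: sq_assoc sq_mult_carrier)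
    then show ?thesis using uu by (simp only: left_mult_one_mat[OF that] right_mult_one_mat[OF that])
  qed
  have img: "?f ` pauli_group n \<subseteq> pauli_group n" using U unfolding cl2 image_subset_iff by blast
  have inj: "inj_on ?f (pauli_group n)"
  proof (rule inj_onI)
    fix P Q assume PQ: "P \<in> pauli_group n" "Q \<in> pauli_group n" "?f P = ?f Q"
    have "P = adj U * ?f P * U" using bk[OF pg_carrier[OF PQ(1)]] by (rule sym)
    also have "\<dots> = adj U * ?f Q * U" using PQ(3) by (simp only:)
    also have "\<dots> = Q" using bk[OF pg_carrier[OF PQ(2)]] .
    finally show "P = Q" .
  qed
  have surj: "?f ` pauli_group n = pauli_group n" by (rule endo_inj_surj[OF pg_finite img inj])
  have "adj U * P * adj (adj U) \<in> pauli_group n" if P: "P \<in> pauli_group n" for P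
  proof -
    obtain Q where Q: "Q \<in> pauli_group n" "P = ?f Q" using P surj by blast
    have "adj U * P * adj (adj U) = adj U * ?f Q * U" using Q(2) by (simp only: adj_adj)
    also have "\<dots> = Q" using bk[OF pg_carrier[OF Q(1)]] .
    finally show ?thesis using Q(1) by (simp only:)
  qed
  then show ?thesis unfolding cl2 using unitary_adj[OF u] by blast
qed

lemma conj_pres: "G \<in> clifford_level n 2 \<Longrightarrow> W \<in> clifford_level n (Suc k) \<Longrightarrow> G * W * adj G \<in> clifford_level n (Suc k)"
proof (induction k arbitrary: W)
  case 0
  then show ?case unfolding cl2 by simp
next
  case (Suc k)
  let ?N = "2^n::nat"
  have uG: "unitary_mat ?N G" using Suc.prems(1) unfolding cl2 by auto
  have uW: "unitary_mat ?N W" using Suc.prems(2) cl_unitary by blast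
  have c: "G \<in> carrier_mat ?N ?N" "W \<in> carrier_mat ?N ?N" "adj G \<in> carrier_mat ?N ?N" "adj W \<in> carrier_mat ?N ?N"
    using uG uW unitary_carrier unitary_adj by blast+
  have "G * W * adj G * P * adj (G * W * adj G) \<in> clifford_level n (Suc k)" if P: "P \<in> pauli_group n" for P
  proof -
    have cP: "P \<in> carrier_mat ?N ?N" using pg_carrier[OF P] .
    have a: "adj (G * W * adj G) = G * adj W * adj G"
      using c adj_mult[OF sq_mult_carrier[OF c(1,2)] c(3)] adj_mult[OF c(1,2)]
      by (simp only: adj_adj sq_assoc sq_mult_carrier)
    have "G * W * adj G * P * adj (G * W * adj G) = G * (W * (adj G * P * adj (adj G)) * adj W) * adj G"
      unfolding a using c cP by (simp only: sq_assoc sq_mult_carrier adj_adj)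
    moreover have "adj G * P * adj (adj G) \<in> pauli_group n"
      using cliff_adj[OF Suc.prems(1)] P unfolding cl2 by auto
    moreover have "W * (adj G * P * adj (adj G)) * adj W \<in> clifford_level n (Suc k)"
      using Suc.prems(2) calculation(2) by auto
    ultimately show ?thesis using Suc.IH[OF Suc.prems(1)] by simp
  qed
  moreover have "unitary_mat ?N (G * W * adj G)" using uG uW unitary_mult unitary_adj by blast
  ultimately show ?case by simp
qed

lemma right_cliff: assumes G: "G \<in> clifford_level n 2" and W: "W \<in> clifford_level n (Suc (Suc k))"
  shows "W * G \<in> clifford_level n (Suc (Suc k))"
proof -
  let ?N = "2^n::nat"
  have uG: "unitary_mat ?N G" using G unfolding cl2 by auto
  have uW: "unitary_mat ?N W" using W cl_unitary by blast
  have c: "G \<in> carrier_mat ?N ?N" "W \<in> carrier_mat ?N ?N" "adj G \<in> carrier_mat ?N ?N" "adj W \<in> carrier_mat ?N ?N"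
    using uG uW unitary_carrier unitary_adj by blast+
  have "W * G * P * adj (W * G) \<in> clifford_level n (Suc k)" if P: "P \<in> pauli_group n" for P
  proof -
    have cP: "P \<in> carrier_mat ?N ?N" using pg_carrier[OF P] .
    have "W * G * P * adj (W * G) = W * (G * P * adj G) * adj W"
      using c cP by (simp only: adj_mult[OF c(2,1)] sq_assoc sq_mult_carrier)
    moreover have "G * P * adj G \<in> pauli_group n" using G P unfolding cl2 by auto
    ultimately show ?thesis using W by auto
  qed
  then show ?thesis using unitary_mult[OF uW uG] by simp
qed

lemma left_cliff: assumes G: "G \<in> clifford_level n 2" and W: "W \<in> clifford_level n (Suc (Suc k))"
  shows "G * W \<in> clifford_level n (Suc (Suc k))"
proof -
  let ?N = "2^n::nat"
  have uG: "unitary_mat ?N G" using G unfolding cl2 by auto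
  have c: "G \<in> carrier_mat ?N ?N" "W \<in> carrier_mat ?N ?N" "adj G \<in> carrier_mat ?N ?N"
    using uG W cl_carrier unitary_carrier unitary_adj by blast+
  have "G * W * adj G * G = G * W * (adj G * G)" using c by (simp only: sq_assoc sq_mult_carrier)
  also have "\<dots> = G * W" using uG c unfolding unitary_mat_def by (simp only: right_mult_one_mat[OF sq_mult_carrier[OF c(1,2)]])
  finally have "G * W = G * W * adj G * G" by (rule sym)
  then show ?thesis using right_cliff[OF G conj_pres[OF G W]] by simp
qed

lemma right_pauli: assumes P: "P \<in> pauli_group n" and W: "W \<in> clifford_level n (Suc k)"
  shows "W * P \<in> clifford_level n (Suc k)"
proof (cases k)
  case 0 then show ?thesis using pg_mult P W by simp
next
  case (Suc j)
  have W': "W \<in> clifford_level n (Suc (Suc j))" using W Suc by (simp only:)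
  show ?thesis using right_cliff[OF pauli_cliff[OF P] W'] Suc by (simp only:)
qed

lemma left_pauli: assumes P: "P \<in> pauli_group n" and W: "W \<in> clifford_level n (Suc k)"
  shows "P * W \<in> clifford_level n (Suc k)"
proof (cases k)
  case 0 then show ?thesis using pg_mult P W by simp
next
  case (Suc j)
  have W': "W \<in> clifford_level n (Suc (Suc j))" using W Suc by (simp only:)
  show ?thesis using left_cliff[OF pauli_cliff[OF P] W'] Suc by (simp only:)
qed



definition blkd :: "nat \<Rightarrow> complex mat \<Rightarrow> complex mat \<Rightarrow> complex mat" where
  "blkd N A B = four_block_mat A (0\<^sub>m N N) (0\<^sub>m N N) B"
definition blko :: "nat \<Rightarrow> complex mat \<Rightarrow> complex mat \<Rightarrow> complex mat" where
  "blko N A B = four_block_mat (0\<^sub>m N N) A B (0\<^sub>m N N)"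

lemma blkd_carrier: "A \<in> carrier_mat N N \<Longrightarrow> B \<in> carrier_mat N N \<Longrightarrow> blkd N A B \<in> carrier_mat (N+N) (N+N)"
  unfolding blkd_def by simp
lemma blko_carrier: "A \<in> carrier_mat N N \<Longrightarrow> B \<in> carrier_mat N N \<Longrightarrow> blko N A B \<in> carrier_mat (N+N) (N+N)"
  unfolding blko_def by simp

context
  fixes N :: nat and A B C D :: "complex mat"
  assumes cA: "A \<in> carrier_mat N N" and cB: "B \<in> carrier_mat N N"
    and cC: "C \<in> carrier_mat N N" and cD: "D \<in> carrier_mat N N"
begin

lemma dd: "blkd N A B * blkd N C D = blkd N (A * C) (B * D)"
  unfolding blkd_def
  by (subst mult_four_block_mat[of _ N N _ N _ N _ _ N _ N]) (use cA cB cC cD in simp_all)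

lemma od: "blko N A B * blkd N C D = blko N (A * D) (B * C)"
  unfolding blkd_def blko_def
  by (subst mult_four_block_mat[of _ N N _ N _ N _ _ N _ N]) (use cA cB cC cD in simp_all)

lemma do: "blkd N A B * blko N C D = blko N (A * C) (B * D)"
  unfolding blkd_def blko_def
  by (subst mult_four_block_mat[of _ N N _ N _ N _ _ N _ N]) (use cA cB cC cD in simp_all)

lemma oo: "blko N A B * blko N C D = blkd N (A * D) (B * C)"
  unfolding blkd_def blko_def
  by (subst mult_four_block_mat[of _ N N _ N _ N _ _ N _ N]) (use cA cB cC cD in simp_all)

lemma blkd_eq: "blkd N A B = blkd N C D \<Longrightarrow> B = D"
proof -
  assume e: "blkd N A B = blkd N C D"
  show "B = D"
  proof (rule eq_matI)
    fix i j assume "i < dim_row D" "j < dim_col D"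
    hence ij: "i < N" "j < N" using cD by auto
    have "blkd N A B $$ (N + i, N + j) = blkd N C D $$ (N + i, N + j)" using e by simp
    then show "B $$ (i,j) = D $$ (i,j)" unfolding blkd_def using ij cA cB cC cD by simp
  qed (use cB cD in auto)
qed

end

lemma adj_blkd: "A \<in> carrier_mat N N \<Longrightarrow> B \<in> carrier_mat N N \<Longrightarrow> adj (blkd N A B) = blkd N (adj A) (adj B)"
  unfolding blkd_def by (subst adj_four_block) auto

lemma adj_blko: "A \<in> carrier_mat N N \<Longrightarrow> B \<in> carrier_mat N N \<Longrightarrow> adj (blko N A B) = blko N (adj B) (adj A)"
  unfolding blko_def by (subst adj_four_block) auto

lemma blkd_one: "blkd N (1\<^sub>m N) (1\<^sub>m N) = 1\<^sub>m (N + N)"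
  unfolding blkd_def by simp

lemma controlled_blkd: "U \<in> carrier_mat (2^n) (2^n) \<Longrightarrow> controlled n U = blkd (2^n) (1\<^sub>m (2^n)) U"
  unfolding controlled_def blkd_def paulis
  by (subst kron_mat2[where N="2^n"], simp)+ (auto intro!: eq_matI)

lemma kron_paulis: assumes "Q \<in> carrier_mat N N"
  shows "kron pauli_I Q = blkd N Q Q" "kron pauli_Z Q = blkd N Q ((-1) \<cdot>\<^sub>m Q)"
    "kron pauli_X Q = blko N Q Q" "kron pauli_Y Q = blko N ((-\<i>) \<cdot>\<^sub>m Q) (\<i> \<cdot>\<^sub>m Q)"
  unfolding paulis blkd_def blko_def using assms
  by (subst kron_mat2[where N=N], simp, (auto intro!: eq_matI))+



lemma two_pow_Suc: "(2::nat)^(Suc n) = 2^n + 2^n" by simp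

lemma pow_commute: "A \<in> carrier_mat N N \<Longrightarrow> A * A ^\<^sub>m k = A ^\<^sub>m k * A"
proof (induction k)
  case 0 then show ?case by simp
next
  case (Suc k)
  have c: "A ^\<^sub>m k \<in> carrier_mat N N" using Suc.prems by simp
  have "A * A ^\<^sub>m Suc k = (A * A ^\<^sub>m k) * A" using Suc.prems c by (simp add: sq_assoc)
  then show ?case using Suc by simp
qed

lemma pow_add: "A \<in> carrier_mat N N \<Longrightarrow> A ^\<^sub>m (j + k) = A ^\<^sub>m j * A ^\<^sub>m k"
proof (induction k)
  case 0 then show ?case by simp
next
  case (Suc k)
  have c: "A ^\<^sub>m k \<in> carrier_mat N N" "A ^\<^sub>m j \<in> carrier_mat N N" using Suc.prems by simp_all
  have "A ^\<^sub>m (j + Suc k) = A ^\<^sub>m j * A ^\<^sub>m k * A" using Suc by simp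
  also have "\<dots> = A ^\<^sub>m j * (A ^\<^sub>m k * A)" by (rule sq_assoc[OF c(2) c(1) Suc.prems])
  finally show ?case by simp
qed

lemma pow_double: "A \<in> carrier_mat N N \<Longrightarrow> A ^\<^sub>m (2 ^ Suc i) = A ^\<^sub>m (2^i) * A ^\<^sub>m (2^i)"
  using pow_add[of A N "2^i" "2^i"] by (simp add: mult_2)

lemma pow_sq: "A \<in> carrier_mat N N \<Longrightarrow> (A * A) ^\<^sub>m k = A ^\<^sub>m (2 * k)"
proof (induction k)
  case 0 then show ?case by simp
next
  case (Suc k)
  have c: "A ^\<^sub>m (2*k) \<in> carrier_mat N N" using Suc.prems by simp
  have "(A * A) ^\<^sub>m Suc k = A ^\<^sub>m (2*k) * (A * A)" using Suc by simp
  also have "\<dots> = A ^\<^sub>m (2*k) * A * A" by (rule sq_assoc[OF c Suc.prems Suc.prems, symmetric])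
  finally show ?case by simp
qed

lemma adj_pow: "A \<in> carrier_mat N N \<Longrightarrow> adj (A ^\<^sub>m k) = adj A ^\<^sub>m k"
proof (induction k)
  case 0 then show ?case by simp
next
  case (Suc k)
  have c: "A ^\<^sub>m k \<in> carrier_mat N N" "adj A \<in> carrier_mat N N" using Suc.prems by (simp_all add: adj_carrier)
  have "adj (A ^\<^sub>m Suc k) = adj A * adj (A ^\<^sub>m k)" using adj_mult[OF c(1) Suc.prems] by simp
  also have "\<dots> = adj A * adj A ^\<^sub>m k" using Suc by simp
  also have "\<dots> = adj A ^\<^sub>m k * adj A" using pow_commute[OF c(2)] by simp
  finally show ?case by simp
qed



lemma smult_left_sq: "A \<in> carrier_mat N N \<Longrightarrow> B \<in> carrier_mat N N \<Longrightarrow> (k \<cdot>\<^sub>m A) * B = (k::complex) \<cdot>\<^sub>m (A * B)"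
  by (rule mult_smult_assoc_mat)
lemma smult_right_sq: "A \<in> carrier_mat N N \<Longrightarrow> B \<in> carrier_mat N N \<Longrightarrow> A * (k \<cdot>\<^sub>m B) = (k::complex) \<cdot>\<^sub>m (A * B)"
  by (rule mult_smult_distrib)

lemma assoc_dim: "dim_col A = dim_row B \<Longrightarrow> dim_col B = dim_row C \<Longrightarrow> (A::complex mat) * B * C = A * (B * C)"
  by (rule assoc_mult_mat[of A "dim_row A" "dim_col A" B "dim_col B" C "dim_col C"]) (auto intro: carrier_matI)
lemma smult_l_dim: "dim_col A = dim_row B \<Longrightarrow> (k \<cdot>\<^sub>m A) * B = (k::complex) \<cdot>\<^sub>m (A * B)"
  by (rule mult_smult_assoc_mat[of A "dim_row A" "dim_col A" B "dim_col B"]) (auto intro: carrier_matI)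
lemma smult_r_dim: "dim_col A = dim_row B \<Longrightarrow> A * (k \<cdot>\<^sub>m B) = (k::complex) \<cdot>\<^sub>m (A * B)"
  by (rule mult_smult_distrib[of A "dim_row A" "dim_col A" B "dim_col B"]) (auto intro: carrier_matI)

lemma ctrl_conj:
  fixes U Q :: "complex mat" and N :: nat
  assumes uU: "unitary_mat N U" and cQ: "Q \<in> carrier_mat N N"
  shows "blkd N (1\<^sub>m N) U * kron pauli_I Q * adj (blkd N (1\<^sub>m N) U) = blkd N Q (U * Q * adj U)"
    "blkd N (1\<^sub>m N) U * kron pauli_Z Q * adj (blkd N (1\<^sub>m N) U) = kron pauli_Z (1\<^sub>m N) * blkd N Q (U * Q * adj U)"
    "blkd N (1\<^sub>m N) U * kron pauli_X Q * adj (blkd N (1\<^sub>m N) U) = kron pauli_X (1\<^sub>m N) * (blkd N U (adj U) * blkd N Q (U * Q * adj U))"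
    "blkd N (1\<^sub>m N) U * kron pauli_Y Q * adj (blkd N (1\<^sub>m N) U) = kron pauli_Y (1\<^sub>m N) * (blkd N U (adj U) * blkd N Q (U * Q * adj U))"
proof -
  have cU: "U \<in> carrier_mat N N" and cU': "adj U \<in> carrier_mat N N" using uU unitary_carrier unitary_adj by blast+
  have uu: "U * adj U = 1\<^sub>m N" "adj U * U = 1\<^sub>m N" using uU unfolding unitary_mat_def by auto
  have a: "adj (blkd N (1\<^sub>m N) U) = blkd N (1\<^sub>m N) (adj U)" using adj_blkd[OF one_carrier_mat cU] by simp
  have q: "adj U * (U * Q * adj U) = Q * adj U"
  proof -
    have "adj U * (U * Q * adj U) = (adj U * U) * Q * adj U" using cU cU' cQ by (simp only: sq_assoc sq_mult_carrier)
    then show ?thesis using uu cQ cU' by simp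
  qed
  have q2: "adj U * (U * (Q * adj U)) = Q * adj U" using q cU cU' cQ by (simp add: assoc_dim)
  show "blkd N (1\<^sub>m N) U * kron pauli_I Q * adj (blkd N (1\<^sub>m N) U) = blkd N Q (U * Q * adj U)"
    unfolding a kron_paulis[OF cQ] using cU cU' cQ by (simp add: dd)
  show "blkd N (1\<^sub>m N) U * kron pauli_Z Q * adj (blkd N (1\<^sub>m N) U) = kron pauli_Z (1\<^sub>m N) * blkd N Q (U * Q * adj U)"
    unfolding a kron_paulis[OF cQ] kron_paulis[OF one_carrier_mat] using cU cU' cQ
    by (simp add: dd smult_l_dim smult_r_dim)
  have l: "blkd N (1\<^sub>m N) U * kron pauli_X Q * adj (blkd N (1\<^sub>m N) U) = blko N (Q * adj U) (U * Q)"
    unfolding a kron_paulis[OF cQ] using cU cU' cQ by (simp add: dd od do)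
  have r: "kron pauli_X (1\<^sub>m N) * (blkd N U (adj U) * blkd N Q (U * Q * adj U)) = blko N (adj U * (U * Q * adj U)) (U * Q)"
    unfolding kron_paulis[OF one_carrier_mat] using cU cU' cQ by (simp add: dd od do)
  show "blkd N (1\<^sub>m N) U * kron pauli_X Q * adj (blkd N (1\<^sub>m N) U) = kron pauli_X (1\<^sub>m N) * (blkd N U (adj U) * blkd N Q (U * Q * adj U))"
    unfolding l r q ..
  have l: "blkd N (1\<^sub>m N) U * kron pauli_Y Q * adj (blkd N (1\<^sub>m N) U) = blko N ((-\<i>) \<cdot>\<^sub>m (Q * adj U)) (\<i> \<cdot>\<^sub>m (U * Q))"
    unfolding a kron_paulis[OF cQ] using cU cU' cQ by (simp add: dd od do smult_l_dim smult_r_dim)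
  have r: "kron pauli_Y (1\<^sub>m N) * (blkd N U (adj U) * blkd N Q (U * Q * adj U)) = blko N ((-\<i>) \<cdot>\<^sub>m (adj U * (U * Q * adj U))) (\<i> \<cdot>\<^sub>m (U * Q))"
    unfolding kron_paulis[OF one_carrier_mat] using cU cU' cQ by (simp add: dd od do smult_l_dim smult_r_dim)
  show "blkd N (1\<^sub>m N) U * kron pauli_Y Q * adj (blkd N (1\<^sub>m N) U) = kron pauli_Y (1\<^sub>m N) * (blkd N U (adj U) * blkd N Q (U * Q * adj U))"
    unfolding l r q ..
qed



lemma ctrl_unitary: assumes "unitary_mat N U" shows "unitary_mat (N+N) (blkd N (1\<^sub>m N) U)"
proof -
  have cU: "U \<in> carrier_mat N N" and cU': "adj U \<in> carrier_mat N N" using assms unitary_carrier unitary_adj by blast+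
  have uu: "U * adj U = 1\<^sub>m N" "adj U * U = 1\<^sub>m N" using assms unfolding unitary_mat_def by auto
  have a: "adj (blkd N (1\<^sub>m N) U) = blkd N (1\<^sub>m N) (adj U)" using adj_blkd[OF one_carrier_mat cU] by simp
  show ?thesis unfolding unitary_mat_def a
    using blkd_carrier[OF one_carrier_mat cU] dd[OF one_carrier_mat cU one_carrier_mat cU'] dd[OF one_carrier_mat cU' one_carrier_mat cU] uu
    by (simp add: blkd_one)
qed

lemma S1_cases: "a \<in> S1 \<Longrightarrow> a = pauli_I \<or> a = pauli_X \<or> a = pauli_Y \<or> a = pauli_Z"
  unfolding S1_def by auto

lemma S1_mems: "pauli_I \<in> S1" "pauli_X \<in> S1" "pauli_Y \<in> S1" "pauli_Z \<in> S1"
  unfolding S1_def by auto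

lemma kron_one_pauli: "a \<in> S1 \<Longrightarrow> kron a (1\<^sub>m (2^n)) \<in> pauli_group (Suc n)"
  using pg_SucI pg_one by blast

lemma blkd_pm_pauli: assumes "Q \<in> pauli_group n" "R = Q \<or> R = (-1) \<cdot>\<^sub>m Q"
  shows "blkd (2^n) Q R \<in> pauli_group (Suc n)"
  using assms kron_paulis[OF pg_carrier[OF assms(1)]] pg_SucI[OF _ assms(1)] S1_mems by metis

lemma cl2_Suc: "W \<in> clifford_level n 2 \<longleftrightarrow> W \<in> clifford_level n (Suc (Suc 0))"
  by (simp add: numeral_2_eq_2)

lemma upper0: assumes U: "U \<in> pauli_group n" shows "blkd (2^n) (1\<^sub>m (2^n)) U \<in> clifford_level (Suc n) 2"
proof -
  let ?N = "2^n::nat"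
  let ?W = "blkd ?N (1\<^sub>m ?N) U"
  have uU: "unitary_mat ?N U" using pg_unitary[OF U] .
  have uW: "unitary_mat (2^Suc n) ?W" using ctrl_unitary[OF uU] by (simp only: two_pow_Suc)
  have herm: "blkd ?N U (adj U) \<in> pauli_group (Suc n)"
    using pg_herm[OF U] blkd_pm_pauli[OF U] by auto
  have "?W * P * adj ?W \<in> pauli_group (Suc n)" if P: "P \<in> pauli_group (Suc n)" for P
  proof -
    obtain a Q where aQ: "P = kron a Q" "a \<in> S1" "Q \<in> pauli_group n" using P by (rule pg_SucE)
    have cQ: "Q \<in> carrier_mat ?N ?N" using pg_carrier[OF aQ(3)] .
    have D: "blkd ?N Q (U * Q * adj U) \<in> pauli_group (Suc n)"
      using blkd_pm_pauli[OF aQ(3) pg_conj[OF U aQ(3)]] .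
    have D2: "blkd ?N U (adj U) * blkd ?N Q (U * Q * adj U) \<in> pauli_group (Suc n)"
      using pg_mult[OF herm D] .
    show ?thesis using S1_cases[OF aQ(2)]
    proof (elim disjE)
      assume "a = pauli_I" then show ?thesis using aQ ctrl_conj(1)[OF uU cQ] D by simp
    next
      assume "a = pauli_X" then show ?thesis using aQ ctrl_conj(3)[OF uU cQ] pg_mult[OF kron_one_pauli D2] by simp
    next
      assume "a = pauli_Y" then show ?thesis using aQ ctrl_conj(4)[OF uU cQ] pg_mult[OF kron_one_pauli D2] by simp
    next
      assume "a = pauli_Z" then show ?thesis using aQ ctrl_conj(2)[OF uU cQ] pg_mult[OF kron_one_pauli D] by simp
    qed
  qed
  then show ?thesis unfolding cl2 using uW by blast
qed



lemma kronI_cliff: assumes U: "U \<in> clifford_level n 2" shows "kron pauli_I U \<in> clifford_level (Suc n) 2"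
proof -
  let ?N = "2^n::nat"
  have uU: "unitary_mat ?N U" using U unfolding cl2 by blast
  have cU: "U \<in> carrier_mat ?N ?N" and cU': "adj U \<in> carrier_mat ?N ?N" using uU unitary_carrier unitary_adj by blast+
  have uu: "U * adj U = 1\<^sub>m ?N" "adj U * U = 1\<^sub>m ?N" using uU unfolding unitary_mat_def by auto
  have I: "pauli_I = 1\<^sub>m 2" by (simp add: paulis mat2_one)
  have cI: "pauli_I \<in> carrier_mat 2 2" using S1_carrier[OF S1_mems(1)] .
  have a: "adj (kron pauli_I U) = kron pauli_I (adj U)" using adj_kron[OF cI cU] S1_adj S1_mems by simp
  have k1: "kron pauli_I U * adj (kron pauli_I U) = 1\<^sub>m (2^Suc n)"
    unfolding a kron_mult2[OF cI cI cU cU'] uu using S1_sq[OF S1_mems(1)] kron_one[of ?N] by simp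
  have k2: "adj (kron pauli_I U) * kron pauli_I U = 1\<^sub>m (2^Suc n)"
    unfolding a kron_mult2[OF cI cI cU' cU] uu using S1_sq[OF S1_mems(1)] kron_one[of ?N] by simp
  have uK: "unitary_mat (2^Suc n) (kron pauli_I U)"
    unfolding unitary_mat_def using k1 k2 kron_carrier[OF cI cU] by simp
  have "kron pauli_I U * P * adj (kron pauli_I U) \<in> pauli_group (Suc n)" if P: "P \<in> pauli_group (Suc n)" for P
  proof -
    obtain b Q where bQ: "P = kron b Q" "b \<in> S1" "Q \<in> pauli_group n" using P by (rule pg_SucE)
    have cb: "b \<in> carrier_mat 2 2" using S1_carrier[OF bQ(2)] .
    have cQ: "Q \<in> carrier_mat ?N ?N" using pg_carrier[OF bQ(3)] .
    have "kron pauli_I U * P * adj (kron pauli_I U) = kron (pauli_I * b * pauli_I) (U * Q * adj U)"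
      unfolding a bQ(1) kron_mult2[OF cI cb cU cQ]
      by (rule kron_mult2) (use cI cb cU cQ cU' in auto)
    also have "\<dots> = kron b (U * Q * adj U)" unfolding I using cb by simp
    finally show ?thesis using pg_SucI[OF bQ(2)] U bQ(3) unfolding cl2 by auto
  qed
  then show ?thesis unfolding cl2 using uK by blast
qed

lemma blkd_pauli_cliff: assumes Q: "Q \<in> pauli_group n" and R: "R \<in> pauli_group n"
  shows "blkd (2^n) Q R \<in> clifford_level (Suc n) 2"
proof -
  let ?N = "2^n::nat"
  have cQ: "Q \<in> carrier_mat ?N ?N" "adj Q \<in> carrier_mat ?N ?N" "R \<in> carrier_mat ?N ?N"
    using Q R pg_carrier pg_adj by blast+
  have "kron pauli_I Q * blkd ?N (1\<^sub>m ?N) (adj Q * R) = blkd ?N Q (Q * (adj Q * R))"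
    unfolding kron_paulis[OF cQ(1)] using cQ by (simp add: dd)
  also have "Q * (adj Q * R) = R"
  proof -
    have "Q * (adj Q * R) = (Q * adj Q) * R" using cQ by (simp only: sq_assoc sq_mult_carrier)
    then show ?thesis using pg_unit[OF Q] cQ by simp
  qed
  finally have e: "blkd ?N Q R = kron pauli_I Q * blkd ?N (1\<^sub>m ?N) (adj Q * R)" by simp
  have "kron pauli_I Q \<in> clifford_level (Suc n) 2" using pauli_cliff[OF pg_SucI[OF _ Q]] S1_mems by blast
  moreover have "blkd ?N (1\<^sub>m ?N) (adj Q * R) \<in> clifford_level (Suc n) 2"
    using upper0[OF pg_mult[OF pg_adj[OF Q] R]] .
  ultimately show ?thesis unfolding e by (rule cliff_mult)
qed

lemma blkd_UU: assumes uU: "unitary_mat N U"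
  shows "blkd N U (adj U) = blkd N (1\<^sub>m N) (adj U * adj U) * kron pauli_I U"
proof -
  have cU: "U \<in> carrier_mat N N" and cU': "adj U \<in> carrier_mat N N" using uU unitary_carrier unitary_adj by blast+
  have uu: "U * adj U = 1\<^sub>m N" "adj U * U = 1\<^sub>m N" using uU unfolding unitary_mat_def by auto
  have "adj U * adj U * U = adj U * (adj U * U)" using cU cU' by (simp only: sq_assoc)
  then have e: "adj U * adj U * U = adj U" using uu right_mult_one_mat[OF cU'] by simp
  show ?thesis unfolding kron_paulis[OF cU] using cU cU' e by (simp add: dd)
qed



lemma pow_one_mat: "A \<in> carrier_mat N N \<Longrightarrow> A ^\<^sub>m 1 = A"
  by simp

lemma upper: "U \<in> clifford_level n 2 \<Longrightarrow> U ^\<^sub>m (2^m) \<in> pauli_group n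
   \<Longrightarrow> blkd (2^n) (1\<^sub>m (2^n)) U \<in> clifford_level (Suc n) (Suc (Suc m))"
proof (induction m arbitrary: U)
  case 0
  have "U \<in> carrier_mat (2^n) (2^n)" using 0 unfolding cl2 using unitary_carrier by blast
  then have "U \<in> pauli_group n" using 0(2) pow_one_mat by simp
  then show ?case using upper0 cl2_Suc by blast
next
  case (Suc m)
  let ?N = "2^n::nat"
  let ?W = "blkd ?N (1\<^sub>m ?N) U"
  have uU: "unitary_mat ?N U" using Suc.prems(1) unfolding cl2 by blast
  have cU: "U \<in> carrier_mat ?N ?N" and cU': "adj U \<in> carrier_mat ?N ?N" using uU unitary_carrier unitary_adj by blast+
  let ?U' = "adj U * adj U"
  have U'c: "?U' \<in> clifford_level n 2" using cliff_mult cliff_adj Suc.prems(1) by blast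
  have "?U' ^\<^sub>m (2^m) = adj U ^\<^sub>m (2 * 2^m)" using pow_sq[OF cU'] by simp
  also have "\<dots> = adj (U ^\<^sub>m (2 ^ Suc m))" using adj_pow[OF cU] by simp
  finally have "?U' ^\<^sub>m (2^m) \<in> pauli_group n" using pg_adj[OF Suc.prems(2)] by simp
  then have IH: "blkd ?N (1\<^sub>m ?N) ?U' \<in> clifford_level (Suc n) (Suc (Suc m))" using Suc.IH[OF U'c] by blast
  have KU: "kron pauli_I U \<in> clifford_level (Suc n) 2" using kronI_cliff[OF Suc.prems(1)] .
  have UU: "blkd ?N U (adj U) = blkd ?N (1\<^sub>m ?N) ?U' * kron pauli_I U" using blkd_UU[OF uU] .
  have uW: "unitary_mat (2^Suc n) ?W" using ctrl_unitary[OF uU] by (simp only: two_pow_Suc)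
  have "?W * P * adj ?W \<in> clifford_level (Suc n) (Suc (Suc m))" if P: "P \<in> pauli_group (Suc n)" for P
  proof -
    obtain a Q where aQ: "P = kron a Q" "a \<in> S1" "Q \<in> pauli_group n" using P by (rule pg_SucE)
    have cQ: "Q \<in> carrier_mat ?N ?N" using pg_carrier[OF aQ(3)] .
    have RQ: "U * Q * adj U \<in> pauli_group n" using Suc.prems(1) aQ(3) unfolding cl2 by blast
    have D: "blkd ?N Q (U * Q * adj U) \<in> clifford_level (Suc n) 2"
      using blkd_pauli_cliff[OF aQ(3) RQ] .
    have D1: "blkd ?N Q (U * Q * adj U) \<in> clifford_level (Suc n) (Suc (Suc m))"
      using cl_nest_le[of _ "Suc n" 1 "Suc m"] D cl2_Suc by simp
    have D2: "blkd ?N U (adj U) * blkd ?N Q (U * Q * adj U) \<in> clifford_level (Suc n) (Suc (Suc m))"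
      unfolding UU using right_cliff[OF D right_cliff[OF KU IH]] .
    show ?thesis using S1_cases[OF aQ(2)]
    proof (elim disjE)
      assume "a = pauli_I" then show ?thesis using aQ ctrl_conj(1)[OF uU cQ] D1 by simp
    next
      assume "a = pauli_X" then show ?thesis
        using aQ ctrl_conj(3)[OF uU cQ] left_pauli[OF kron_one_pauli D2] S1_mems by simp
    next
      assume "a = pauli_Y" then show ?thesis
        using aQ ctrl_conj(4)[OF uU cQ] left_pauli[OF kron_one_pauli D2] S1_mems by simp
    next
      assume "a = pauli_Z" then show ?thesis
        using aQ ctrl_conj(2)[OF uU cQ] left_pauli[OF kron_one_pauli D1] S1_mems by simp
    qed
  qed
  then show ?case using uW by (simp only: clifford_level.simps) blast
qed



lemma comm_X: assumes cA: "A \<in> carrier_mat N N" and cB: "B \<in> carrier_mat N N"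
  shows "blkd N A B * kron pauli_X (1\<^sub>m N) * adj (blkd N A B) * kron pauli_X (1\<^sub>m N) = blkd N (A * adj B) (B * adj A)"
proof -
  have cA': "adj A \<in> carrier_mat N N" and cB': "adj B \<in> carrier_mat N N" using cA cB adj_carrier by blast+
  have a: "adj (blkd N A B) = blkd N (adj A) (adj B)" using adj_blkd[OF cA cB] .
  show ?thesis unfolding a kron_paulis[OF one_carrier_mat]
    using cA cB cA' cB' by (simp add: dd do od oo)
qed

lemma comm_step: assumes W: "W \<in> clifford_level (Suc n) (Suc (Suc k))"
  shows "W * kron pauli_X (1\<^sub>m (2^n)) * adj W * kron pauli_X (1\<^sub>m (2^n)) \<in> clifford_level (Suc n) (Suc k)"
proof -
  have XI: "kron pauli_X (1\<^sub>m (2^n)) \<in> pauli_group (Suc n)" using kron_one_pauli S1_mems by blast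
  then have "W * kron pauli_X (1\<^sub>m (2^n)) * adj W \<in> clifford_level (Suc n) (Suc k)" using W by simp
  then show ?thesis using right_pauli[OF XI] by blast
qed

lemma blko_blkd_eq: assumes "A \<in> carrier_mat N N" "B \<in> carrier_mat N N" "C \<in> carrier_mat N N" "D \<in> carrier_mat N N"
  and e: "blko N C D = blkd N A B" shows "B = 0\<^sub>m N N"
proof (rule eq_matI)
  fix i j assume "i < dim_row (0\<^sub>m N N :: complex mat)" "j < dim_col (0\<^sub>m N N :: complex mat)"
  hence ij: "i < N" "j < N" by auto
  have "blko N C D $$ (N + i, N + j) = blkd N A B $$ (N + i, N + j)" using e by simp
  then show "B $$ (i,j) = 0\<^sub>m N N $$ (i,j)" unfolding blkd_def blko_def using ij assms by simp
qed (use assms in auto)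

lemma extract_pauli: assumes P: "blkd (2^n) B A \<in> pauli_group (Suc n)" and uA: "unitary_mat (2^n) A"
  and cB: "B \<in> carrier_mat (2^n) (2^n)"
  shows "A \<in> pauli_group n"
proof -
  let ?N = "2^n::nat"
  have cA: "A \<in> carrier_mat ?N ?N" using uA unitary_carrier by blast
  obtain a Q where aQ: "blkd ?N B A = kron a Q" "a \<in> S1" "Q \<in> pauli_group n" using P by (rule pg_SucE)
  have cQ: "Q \<in> carrier_mat ?N ?N" using pg_carrier[OF aQ(3)] .
  have cQ': "(-1) \<cdot>\<^sub>m Q \<in> carrier_mat ?N ?N" "(-\<i>) \<cdot>\<^sub>m Q \<in> carrier_mat ?N ?N" "\<i> \<cdot>\<^sub>m Q \<in> carrier_mat ?N ?N"
    using cQ by auto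
  have nz: "A \<noteq> 0\<^sub>m ?N ?N"
  proof
    assume "A = 0\<^sub>m ?N ?N"
    then have "1\<^sub>m ?N = 0\<^sub>m ?N ?N * adj (0\<^sub>m ?N ?N)" using uA unfolding unitary_mat_def by simp
    also have "\<dots> = (0\<^sub>m ?N ?N :: complex mat)" by simp
    finally have "(1\<^sub>m ?N :: complex mat) $$ (0,0) = 0\<^sub>m ?N ?N $$ (0,0)" by simp
    then show False by simp
  qed
  show ?thesis using S1_cases[OF aQ(2)]
  proof (elim disjE)
    assume "a = pauli_I"
    then have "blkd ?N B A = blkd ?N Q Q" using aQ kron_paulis[OF cQ] by simp
    then have "A = Q" using blkd_eq[OF cB cA cQ cQ] by blast
    then show ?thesis using aQ(3) by simp
  next
    assume "a = pauli_Z"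
    then have "blkd ?N B A = blkd ?N Q ((-1) \<cdot>\<^sub>m Q)" using aQ kron_paulis[OF cQ] by simp
    then have "A = (-1) \<cdot>\<^sub>m Q" using blkd_eq[OF cB cA cQ cQ'(1)] by blast
    then show ?thesis using pg_neg[OF aQ(3)] by simp
  next
    assume "a = pauli_X"
    then have "blko ?N Q Q = blkd ?N B A" using aQ kron_paulis[OF cQ] by simp
    then show ?thesis using blko_blkd_eq[OF cB cA cQ cQ] nz by blast
  next
    assume "a = pauli_Y"
    then have "blko ?N ((-\<i>) \<cdot>\<^sub>m Q) (\<i> \<cdot>\<^sub>m Q) = blkd ?N B A" using aQ kron_paulis[OF cQ] by simp
    then show ?thesis using blko_blkd_eq[OF cB cA cQ'(2) cQ'(3)] nz by blast
  qed
qed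

lemma unitary_pow: "unitary_mat N A \<Longrightarrow> unitary_mat N (A ^\<^sub>m k)"
proof (induction k)
  case 0
  have "A \<in> carrier_mat N N" using 0 unitary_carrier by blast
  then show ?case unfolding unitary_mat_def by simp
next
  case (Suc k) then show ?case using unitary_mult by simp
qed

lemma lower: assumes uU: "unitary_mat (2^n) U"
  and W: "blkd (2^n) (1\<^sub>m (2^n)) U \<in> clifford_level (Suc n) (Suc (Suc k))"
  shows "U ^\<^sub>m (2^k) \<in> pauli_group n"
proof -
  let ?N = "2^n::nat"
  have cU: "U \<in> carrier_mat ?N ?N" using uU unitary_carrier by blast
  have claim: "i \<le> k \<Longrightarrow> blkd ?N (adj (U ^\<^sub>m (2^i))) (U ^\<^sub>m (2^i)) \<in> clifford_level (Suc n) (Suc (k - i))" for i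
  proof (induction i)
    case 0
    have "blkd ?N (1\<^sub>m ?N) U * kron pauli_X (1\<^sub>m ?N) * adj (blkd ?N (1\<^sub>m ?N) U) * kron pauli_X (1\<^sub>m ?N)
        = blkd ?N (adj U) U"
      using comm_X[OF one_carrier_mat cU] cU adj_carrier[OF cU] by simp
    moreover have "U ^\<^sub>m (2^0) = U" using cU by simp
    ultimately show ?case using comm_step[OF W] by simp
  next
    case (Suc i)
    let ?A = "U ^\<^sub>m (2^i)"
    have cA: "?A \<in> carrier_mat ?N ?N" "adj ?A \<in> carrier_mat ?N ?N" using cU adj_carrier by auto
    have k: "k - i = Suc (k - Suc i)" using Suc.prems by simp
    have "blkd ?N (adj ?A) ?A \<in> clifford_level (Suc n) (Suc (Suc (k - Suc i)))"
      using Suc.IH Suc.prems k by simp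
    then have "blkd ?N (adj ?A) ?A * kron pauli_X (1\<^sub>m ?N) * adj (blkd ?N (adj ?A) ?A) * kron pauli_X (1\<^sub>m ?N)
       \<in> clifford_level (Suc n) (Suc (k - Suc i))" by (rule comm_step)
    moreover have "blkd ?N (adj ?A) ?A * kron pauli_X (1\<^sub>m ?N) * adj (blkd ?N (adj ?A) ?A) * kron pauli_X (1\<^sub>m ?N)
       = blkd ?N (adj ?A * adj ?A) (?A * ?A)"
      using comm_X[OF cA(2) cA(1)] by simp
    moreover have "U ^\<^sub>m (2 ^ Suc i) = ?A * ?A" using pow_double[OF cU] .
    moreover have "adj (?A * ?A) = adj ?A * adj ?A" using adj_mult[OF cA(1) cA(1)] .
    ultimately show ?case by simp
  qed
  have "blkd ?N (adj (U ^\<^sub>m (2^k))) (U ^\<^sub>m (2^k)) \<in> pauli_group (Suc n)" using claim[of k] by simp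
  then show ?thesis using extract_pauli unitary_pow[OF uU] adj_carrier[OF pow_carrier_mat[OF cU]] by blast
qed



lemma level_exact:
  assumes U: "U \<in> clifford_level n 2" and per: "pauli_periodicity n U m" and m: "m \<ge> 1"
  shows "controlled n U \<in> clifford_level (n+1) (m+2) - clifford_level (n+1) (m+1)"
proof -
  let ?N = "2^n::nat"
  have uU: "unitary_mat ?N U" using U unfolding cl2 by blast
  have cU: "U \<in> carrier_mat ?N ?N" using uU unitary_carrier by blast
  have c: "controlled n U = blkd ?N (1\<^sub>m ?N) U" using controlled_blkd[OF cU] .
  have "blkd ?N (1\<^sub>m ?N) U \<in> clifford_level (Suc n) (Suc (Suc m))"
    using upper[OF U] per unfolding pauli_periodicity_def by blast
  moreover have "blkd ?N (1\<^sub>m ?N) U \<notin> clifford_level (Suc n) (Suc m)"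
  proof
    assume a: "blkd ?N (1\<^sub>m ?N) U \<in> clifford_level (Suc n) (Suc m)"
    obtain k where k: "m = Suc k" using m by (cases m) auto
    have "U ^\<^sub>m (2^k) \<in> pauli_group n" using lower[OF uU] a k by blast
    moreover have "k < m" using k by simp
    ultimately show False using per unfolding pauli_periodicity_def by blast
  qed
  ultimately show ?thesis unfolding c by simp
qed

theorem mainTheorem3:
  fixes n m :: nat and U V :: "complex mat"
  assumes "n \<ge> 1"
    and "U \<in> clifford_level n 2"
    and "pauli_periodicity n U m"
    and "m \<ge> 1"
    and "V \<in> carrier_mat (2^n) (2^n)" and "U * V = 1\<^sub>m (2^n)" and "V * U = 1\<^sub>m (2^n)"
  shows "controlled n U * controlled n V = 1\<^sub>m (2^(n+1))
       \<and> controlled n V * controlled n U = 1\<^sub>m (2^(n+1))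
       \<and> V \<in> clifford_level n 2
       \<and> pauli_periodicity n V m
       \<and> controlled n V \<in> clifford_level (n+1) (m+2) - clifford_level (n+1) (m+1)
       \<and> controlled n U \<in> clifford_level (n+1) (m+2) - clifford_level (n+1) (m+1)"
proof -
  let ?N = "2^n::nat"
  have U: "U \<in> clifford_level n 2" using assms(2) .
  have uU: "unitary_mat ?N U" using U unfolding cl2 by blast
  have cU: "U \<in> carrier_mat ?N ?N" and cU': "adj U \<in> carrier_mat ?N ?N" using uU unitary_carrier unitary_adj by blast+
  have cV: "V \<in> carrier_mat ?N ?N" using assms(5) .
  have "V = V * (U * adj U)" using uU cV unfolding unitary_mat_def by simp
  also have "\<dots> = (V * U) * adj U" using cV cU cU' by (simp only: sq_assoc)
  also have "\<dots> = adj U" using assms(7) left_mult_one_mat[OF cU'] by simp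
  finally have VU: "V = adj U" .
  have V: "V \<in> clifford_level n 2" unfolding VU using cliff_adj[OF U] .
  have perV: "pauli_periodicity n V m"
  proof -
    have "V ^\<^sub>m k \<in> pauli_group n \<longleftrightarrow> U ^\<^sub>m k \<in> pauli_group n" for k
    proof -
      have "V ^\<^sub>m k = adj (U ^\<^sub>m k)" unfolding VU using adj_pow[OF cU] by simp
      then show ?thesis using pg_adj[of "U ^\<^sub>m k" n] pg_adj[of "adj (U ^\<^sub>m k)" n] by auto
    qed
    then show ?thesis using assms(3) unfolding pauli_periodicity_def by simp
  qed
  have cUb: "controlled n U = blkd ?N (1\<^sub>m ?N) U" using controlled_blkd[OF cU] .
  have cVb: "controlled n V = blkd ?N (1\<^sub>m ?N) V" using controlled_blkd[OF cV] .
  have two: "(2::nat)^(n+1) = ?N + ?N" by simp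
  have m1: "controlled n U * controlled n V = 1\<^sub>m (2^(n+1))"
    unfolding cUb cVb two using dd[OF one_carrier_mat cU one_carrier_mat cV] assms(6) blkd_one by simp
  have m2: "controlled n V * controlled n U = 1\<^sub>m (2^(n+1))"
    unfolding cUb cVb two using dd[OF one_carrier_mat cV one_carrier_mat cU] assms(7) blkd_one by simp
  show ?thesis using m1 m2 V perV level_exact[OF V perV assms(4)] level_exact[OF U assms(3) assms(4)] by blast
qed


end
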